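(* Let $X$ be a compact metrizable space, let $f\in\mathrm{C}(X)$ be self-adjoint, and let $\varepsilon>0$. Then there exist $n\in\mathbb N$, $\delta>0$ and self-adjoint $f_1,\dots,f_n\in\mathrm{C}(X)$ such that $\|f-f_i\|_\infty<\varepsilon$ for $i=1,\dots,n$, and $\frac1n\,|\{1\le i\le n:|f_i(x)|<\delta\}|<\varepsilon$ for all $x\in X$. In particular, $\frac1n(\tau(\chi_\delta(f_1))+\cdots+\tau(\chi_\delta(f_n)))<\varepsilon$ for every tracial state $\tau$ of $\mathrm{C}(X)$.
   Context: $\chi_\delta\colon\mathbb R\to\mathbb R$ is the continuous function equal to $1$ on $\{|t|<\delta/2\}$, $0$ on $\{|t|>\delta\}$, and linear otherwise. *)

theory Defs
  imports "HOL-Analysis.Analysis"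
begin

definition chi :: "real \<Rightarrow> real \<Rightarrow> real" where
  "chi \<delta> t = (if \<bar>t\<bar> < \<delta> / 2 then 1
               else if \<bar>t\<bar> > \<delta> then 0
               else 2 * (\<delta> - \<bar>t\<bar>) / \<delta>)"

definition sup_norm :: "'a set \<Rightarrow> ('a \<Rightarrow> 'b::real_normed_vector) \<Rightarrow> real" where
  "sup_norm X g = (if X = {} then 0 else (SUP x\<in>X. norm (g x)))"

definition tracial_state :: "'a::topological_space set \<Rightarrow> (('a \<Rightarrow> complex) \<Rightarrow> complex) \<Rightarrow> bool" where
  "tracial_state X \<tau> \<longleftrightarrow>
     (\<forall>g h. continuous_on X g \<longrightarrow> continuous_on X h \<longrightarrow>
        \<tau> (\<lambda>x. g x + h x) = \<tau> g + \<tau> h) \<and>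
     (\<forall>c g. continuous_on X g \<longrightarrow> \<tau> (\<lambda>x. c * g x) = c * \<tau> g) \<and>
     (\<forall>g. continuous_on X g \<longrightarrow> (\<forall>x\<in>X. Im (g x) = 0 \<and> 0 \<le> Re (g x)) \<longrightarrow>
        Im (\<tau> g) = 0 \<and> 0 \<le> Re (\<tau> g)) \<and>
     \<tau> (\<lambda>x. 1) = 1 \<and>
     (\<forall>g h. continuous_on X g \<longrightarrow> continuous_on X h \<longrightarrow>
        \<tau> (\<lambda>x. g x * h x) = \<tau> (\<lambda>x. h x * g x))"

end

theory Submission
  imports Defs
begin

lemma chi_alt: "\<delta> > 0 \<Longrightarrow> chi \<delta> t = max 0 (min 1 (2 * (\<delta> - \<bar>t\<bar>) / \<delta>))"
  unfolding chi_def by (auto simp: field_simps)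

lemma chi_cont: "\<delta> > 0 \<Longrightarrow> continuous_on S (chi \<delta>)"
proof -
  assume d: "\<delta> > 0"
  have "continuous_on S (\<lambda>t. max 0 (min 1 (2 * (\<delta> - \<bar>t\<bar>) / \<delta>)))"
    by (intro continuous_intros) (use d in auto)
  then show ?thesis using chi_alt[OF d] by (simp add: fun_eq_iff)
qed

lemma chi_bounds: "\<delta> > 0 \<Longrightarrow> 0 \<le> chi \<delta> t \<and> chi \<delta> t \<le> 1"
  by (simp add: chi_alt)

lemma chi_zero: "\<delta> > 0 \<Longrightarrow> \<bar>t\<bar> > \<delta> \<Longrightarrow> chi \<delta> t = 0"
  by (simp add: chi_def)

lemma tau_add:
  assumes "tracial_state X \<tau>" "continuous_on X g" "continuous_on X h"
  shows "\<tau> (\<lambda>x. g x + h x) = \<tau> g + \<tau> h"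
  using assms unfolding tracial_state_def by blast

lemma tau_zero:
  assumes "tracial_state X \<tau>"
  shows "\<tau> (\<lambda>x. 0) = 0"
proof -
  have "\<forall>c g. continuous_on X g \<longrightarrow> \<tau> (\<lambda>x. c * g x) = c * \<tau> g"
    using assms unfolding tracial_state_def by blast
  hence "\<tau> (\<lambda>x. 0 * 1) = 0 * \<tau> (\<lambda>x. 1)" using continuous_on_const by blast
  thus ?thesis by simp
qed

lemma tau_sum:
  assumes "tracial_state X \<tau>" "finite S" "\<And>i. i \<in> S \<Longrightarrow> continuous_on X (g i)"
  shows "\<tau> (\<lambda>x. \<Sum>i\<in>S. g i x) = (\<Sum>i\<in>S. \<tau> (g i))"
  using assms(2,3)
proof (induction S rule: finite_induct)
  case empty
  then show ?case using tau_zero[OF assms(1)] by simp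
next
  case (insert a S)
  have ca: "continuous_on X (g a)" using insert by auto
  have cs: "continuous_on X (\<lambda>x. \<Sum>i\<in>S. g i x)"
    using insert by (intro continuous_intros) auto
  have "\<tau> (\<lambda>x. \<Sum>i\<in>insert a S. g i x) = \<tau> (\<lambda>x. g a x + (\<Sum>i\<in>S. g i x))"
    using insert by simp
  also have "\<dots> = \<tau> (g a) + \<tau> (\<lambda>x. \<Sum>i\<in>S. g i x)"
    using tau_add[OF assms(1) ca cs] by simp
  finally show ?case using insert by simp
qed

theorem corollary3p8:
  fixes X :: "'a::metric_space set" and f :: "'a \<Rightarrow> real" and \<epsilon> :: real
  assumes "compact X" and "continuous_on X f" and "\<epsilon> > 0"
  shows "\<exists>(n::nat) (\<delta>::real) (F :: nat \<Rightarrow> 'a \<Rightarrow> real).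
           n > 0 \<and> \<delta> > 0 \<and>
           (\<forall>i\<in>{1..n}. continuous_on X (F i) \<and> sup_norm X (\<lambda>x. f x - F i x) < \<epsilon>) \<and>
           (\<forall>x\<in>X. real (card {i\<in>{1..n}. \<bar>F i x\<bar> < \<delta>}) / real n < \<epsilon>) \<and>
           (\<forall>\<tau>. tracial_state X \<tau> \<longrightarrow>
              (let s = (\<Sum>i=1..n. \<tau> (\<lambda>x. complex_of_real (chi \<delta> (F i x)))) / of_nat n
               in Im s = 0 \<and> Re s < \<epsilon>))"
proof -
  define n :: nat where "n = nat \<lceil>1 / \<epsilon>\<rceil> + 1"
  have npos: "n > 0" by (simp add: n_def)
  have "1 / \<epsilon> < real n" unfolding n_def by linarith
  hence ninv: "1 / real n < \<epsilon>" using assms(3) npos by (simp add: field_simps)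
  define \<eta> where "\<eta> = \<epsilon> / (real n + 1)"
  have etapos: "\<eta> > 0" using assms(3) by (simp add: \<eta>_def)
  have neta: "real n * \<eta> < \<epsilon>" using assms(3) by (simp add: \<eta>_def field_simps)
  define \<delta> where "\<delta> = \<eta> / 8"
  have dpos: "\<delta> > 0" using etapos by (simp add: \<delta>_def)
  define F where "F = (\<lambda>(i::nat) x. f x + real i * \<eta>)"
  have uniq: "i = j" if "\<bar>F i x\<bar> \<le> \<delta>" "\<bar>F j x\<bar> \<le> \<delta>" for i j x
  proof -
    have "\<bar>real i * \<eta> - real j * \<eta>\<bar> \<le> 2 * \<delta>" using that by (simp add: F_def abs_le_iff)
    hence "\<bar>real i - real j\<bar> * \<eta> \<le> \<eta> / 4"
      using etapos by (simp add: \<delta>_def left_diff_distrib[symmetric] abs_mult)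
    hence "\<bar>real i - real j\<bar> * \<eta> \<le> (1 / 4) * \<eta>" by simp
    hence "\<bar>real i - real j\<bar> \<le> 1 / 4" using etapos mult_right_le_imp_le by blast
    thus "i = j" by linarith
  qed
  have card1: "card {i\<in>{1..n}. \<bar>F i x\<bar> \<le> \<delta>} \<le> 1" for x
  proof (cases "{i\<in>{1..n}. \<bar>F i x\<bar> \<le> \<delta>} = {}")
    case True then show ?thesis by (simp only: card.empty)
  next
    case False
    then obtain i0 where i0: "i0 \<in> {i\<in>{1..n}. \<bar>F i x\<bar> \<le> \<delta>}" by blast
    have "{i\<in>{1..n}. \<bar>F i x\<bar> \<le> \<delta>} \<subseteq> {i0}" using uniq i0 by auto
    from card_mono[OF _ this] show ?thesis by simp
  qed
  have P1: "\<forall>i\<in>{1..n}. continuous_on X (F i) \<and> sup_norm X (\<lambda>x. f x - F i x) < \<epsilon>"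
  proof
    fix i assume i: "i \<in> {1..n}"
    have "continuous_on X (F i)" unfolding F_def using assms(2) by (intro continuous_intros) auto
    moreover have "sup_norm X (\<lambda>x. f x - F i x) < \<epsilon>"
    proof (cases "X = {}")
      case True then show ?thesis using assms(3) by (simp add: sup_norm_def)
    next
      case False
      have "sup_norm X (\<lambda>x. f x - F i x) = real i * \<eta>"
        using False etapos by (simp add: sup_norm_def F_def abs_mult)
      also have "\<dots> \<le> real n * \<eta>" using i etapos by (intro mult_right_mono) auto
      finally show ?thesis using neta by linarith
    qed
    ultimately show "continuous_on X (F i) \<and> sup_norm X (\<lambda>x. f x - F i x) < \<epsilon>" ..
  qed
  have P2: "\<forall>x\<in>X. real (card {i\<in>{1..n}. \<bar>F i x\<bar> < \<delta>}) / real n < \<epsilon>"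
  proof
    fix x assume "x \<in> X"
    have "card {i\<in>{1..n}. \<bar>F i x\<bar> < \<delta>} \<le> card {i\<in>{1..n}. \<bar>F i x\<bar> \<le> \<delta>}"
      by (intro card_mono) auto
    hence "card {i\<in>{1..n}. \<bar>F i x\<bar> < \<delta>} \<le> 1" using card1[of x] by linarith
    hence "real (card {i\<in>{1..n}. \<bar>F i x\<bar> < \<delta>}) / real n \<le> 1 / real n"
      using npos by (intro divide_right_mono) auto
    thus "real (card {i\<in>{1..n}. \<bar>F i x\<bar> < \<delta>}) / real n < \<epsilon>" using ninv by linarith
  qed
  have P3: "\<forall>\<tau>. tracial_state X \<tau> \<longrightarrow>
              (let s = (\<Sum>i=1..n. \<tau> (\<lambda>x. complex_of_real (chi \<delta> (F i x)))) / of_nat n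
               in Im s = 0 \<and> Re s < \<epsilon>)"
  proof (intro allI impI)
    fix \<tau> assume T: "tracial_state X \<tau>"
    define g where "g = (\<lambda>i x. complex_of_real (chi \<delta> (F i x)))"
    have gc: "continuous_on X (g i)" for i
    proof -
      have "continuous_on X (F i)" unfolding F_def using assms(2) by (intro continuous_intros) auto
      hence "continuous_on X (\<lambda>x. chi \<delta> (F i x))"
        using continuous_on_compose2[OF chi_cont[OF dpos, of UNIV]] by blast
      thus ?thesis unfolding g_def by (intro continuous_intros)
    qed
    have pos: "Im (\<tau> h) = 0 \<and> 0 \<le> Re (\<tau> h)" if "continuous_on X h" "\<forall>x\<in>X. Im (h x) = 0 \<and> 0 \<le> Re (h x)" for h
      using T that unfolding tracial_state_def by blast
    have gi: "Im (\<tau> (g i)) = 0" for i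
      using pos[OF gc] chi_bounds[OF dpos] by (simp add: g_def)
    define G where "G = (\<lambda>x. \<Sum>i\<in>{1..n}. g i x)"
    have Gc: "continuous_on X G" unfolding G_def using gc by (intro continuous_intros)
    have tG: "\<tau> G = (\<Sum>i\<in>{1..n}. \<tau> (g i))"
      using tau_sum[OF T, of "{1..n}" g] gc unfolding G_def by simp
    have Greal: "G x = complex_of_real (\<Sum>i\<in>{1..n}. chi \<delta> (F i x))" for x
      by (simp add: G_def g_def)
    have Gle: "(\<Sum>i\<in>{1..n}. chi \<delta> (F i x)) \<le> 1" for x
    proof -
      have "(\<Sum>i\<in>{1..n}. chi \<delta> (F i x)) = (\<Sum>i\<in>{i\<in>{1..n}. \<bar>F i x\<bar> \<le> \<delta>}. chi \<delta> (F i x))"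
        by (intro sum.mono_neutral_right) (auto intro: chi_zero[OF dpos])
      also have "\<dots> \<le> (\<Sum>i\<in>{i\<in>{1..n}. \<bar>F i x\<bar> \<le> \<delta>}. 1)"
        by (intro sum_mono) (use chi_bounds[OF dpos] in auto)
      also have "\<dots> \<le> 1" using card1[of x] by simp
      finally show ?thesis .
    qed
    have add: "\<tau> (\<lambda>x. (1 - G x) + G x) = \<tau> (\<lambda>x. 1 - G x) + \<tau> G"
      using tau_add[OF T, of "\<lambda>x. 1 - G x" G] Gc by (simp add: continuous_on_diff)
    have "\<tau> (\<lambda>x. (1 - G x) + G x) = 1" using T unfolding tracial_state_def by simp
    hence one: "\<tau> (\<lambda>x. 1 - G x) = 1 - \<tau> G" using add by (simp add: algebra_simps)
    have "Im (\<tau> (\<lambda>x. 1 - G x)) = 0 \<and> 0 \<le> Re (\<tau> (\<lambda>x. 1 - G x))"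
      using Gc Gle by (intro pos) (auto intro: continuous_intros simp: Greal)
    hence ReG: "Re (\<tau> G) \<le> 1" using one by simp
    have ImG: "Im (\<tau> G) = 0" using tG gi by (simp add: Im_sum)
    show "let s = (\<Sum>i=1..n. \<tau> (\<lambda>x. complex_of_real (chi \<delta> (F i x)))) / of_nat n
               in Im s = 0 \<and> Re s < \<epsilon>"
    proof -
      have s: "(\<Sum>i=1..n. \<tau> (\<lambda>x. complex_of_real (chi \<delta> (F i x)))) = \<tau> G"
        using tG by (simp add: g_def)
      have "Re (\<tau> G) / real n \<le> 1 / real n" using ReG npos by (intro divide_right_mono) auto
      hence "Re (\<tau> G) / real n < \<epsilon>" using ninv by linarith
      then show ?thesis unfolding s Let_def using ImG
        by (simp add: Re_divide_of_nat Im_divide_of_nat)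
    qed
  qed
  show ?thesis using npos dpos P1 P2 P3 by (intro exI[of _ n] exI[of _ \<delta>] exI[of _ F]) simp
qed

end
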